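(* Let $n\ge 2$, $C>0$, let $x\in\mathcal{K}_{S+}$ be the true data, and let $\tilde{x}=x+\eta$ where either (i) $\eta$ has i.i.d. Laplace entries with mean $0$ and scale $b>0$, or (ii) $\eta\sim\mathcal{N}(0,\sigma^2 I_n)$ with $\sigma>0$. Then for every pair of indices $(i,j)$ with $x_i\le x_j$, $$\mathcal{B}(\pi_{S+})_i-\mathcal{B}(\pi_{S+})_j \;\ge\; \mathcal{B}((\pi_S)_+)_i-\mathcal{B}((\pi_S)_+)_j,$$ and $$\mathcal{B}(\pi_{S+})_i-\mathcal{B}(\pi_{S+})_j \;\le\; \mathcal{B}((\pi_S)_+)_i-\mathcal{B}((\pi_S)_+)_j + \mathbb{E}\big[T(\pi_S(\tilde{x}))\big].$$
   Context: Let $C>0$, $\mathcal{K}_S=\{v\in\mathbb{R}^n:\sum_i v_i=C\}$, $\mathcal{K}_{S+}=\{v\in\mathcal{K}_S: v\ge 0\}$; $\pi_S$ and $\pi_{S+}$ denote the Euclidean projections of $\mathbb{R}^n$ onto $\mathcal{K}_S$ and $\mathcal{K}_{S+}$ respectively. For $y\in\mathcal{K}_S$, $T(y)$ is the unique non-negative real $t$ with $\sum_i (y_i-t)_+=C$, where $(y)_+=\max\{y,0\}$ componentwise. For a map $\pi:\mathbb{R}^n\to\mathbb{R}^n$, its bias is $\mathcal{B}(\pi)=\mathbb{E}_{\tilde{x}}[\pi(\tilde{x})]-x\in\mathbb{R}^n$; in particular $\mathcal{B}((\pi_S)_+)=\mathbb{E}_{\tilde{x}}[(\pi_S(\tilde{x}))_+]-x$.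 *)

theory Defs
  imports "HOL-Analysis.Analysis" "HOL-Probability.Probability"
begin

definition K_S :: "real \<Rightarrow> (real ^ 'n) set" where
  "K_S C = {v. (\<Sum>i\<in>UNIV. v $ i) = C}"

definition K_Splus :: "real \<Rightarrow> (real ^ 'n) set" where
  "K_Splus C = {v \<in> K_S C. \<forall>i. 0 \<le> v $ i}"

definition proj_S :: "real \<Rightarrow> real ^ 'n \<Rightarrow> real ^ 'n" where
  "proj_S C y = closest_point (K_S C) y"

definition proj_Splus :: "real \<Rightarrow> real ^ 'n \<Rightarrow> real ^ 'n" where
  "proj_Splus C y = closest_point (K_Splus C) y"

definition pos_part :: "real ^ 'n \<Rightarrow> real ^ 'n" where
  "pos_part v = (\<chi> i. max (v $ i) 0)"

definition T_thr :: "real \<Rightarrow> real ^ 'n \<Rightarrow> real" where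
  "T_thr C y = (THE t. 0 \<le> t \<and> (\<Sum>i\<in>UNIV. max (y $ i - t) 0) = C)"

definition laplace_noise :: "real \<Rightarrow> (real ^ 'n) measure" where
  "laplace_noise b = density lborel
     (\<lambda>\<eta>. ennreal (\<Prod>i\<in>UNIV. exp (- \<bar>\<eta> $ i\<bar> / b) / (2 * b)))"

definition gauss_noise :: "real \<Rightarrow> (real ^ 'n) measure" where
  "gauss_noise \<sigma> = density lborel
     (\<lambda>\<eta>. ennreal (\<Prod>i\<in>UNIV. normal_density 0 \<sigma> (\<eta> $ i)))"

definition bias :: "(real ^ 'n) measure \<Rightarrow> real ^ 'n \<Rightarrow> (real ^ 'n \<Rightarrow> real ^ 'n) \<Rightarrow> real ^ 'n" where
  "bias N x p = (\<integral>\<eta>. p (x + \<eta>) \<partial>N) - x"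

end

theory Submission
  imports Defs
begin


lemma vec_nth_meas[measurable]: "(\<lambda>\<eta>::real^'n. \<eta>$k) \<in> borel_measurable borel"
  by (intro borel_measurable_continuous_onI continuous_intros)

lemma ennreal_prod_lt_top:
  "finite A \<Longrightarrow> (\<And>i. i \<in> A \<Longrightarrow> f i < \<infinity>) \<Longrightarrow> prod f A < (\<infinity>::ennreal)"
  by (induct rule: finite_induct) (auto simp: ennreal_mult_less_top)

lemma prod_Basis_vec: "(\<Prod>b\<in>(Basis::(real^'n) set). g b) = (\<Prod>k\<in>UNIV. g (axis k 1))"
proof -
  have "Basis = range (\<lambda>k::'n. axis k (1::real))" unfolding Basis_vec_def by auto
  moreover have i: "inj (\<lambda>k::'n. axis k (1::real))" by (auto intro!: injI simp: axis_eq_axis)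
  ultimately have "prod g Basis = prod g (range (\<lambda>k::'n. axis k (1::real)))" by simp
  also have "\<dots> = prod (g \<circ> (\<lambda>k::'n. axis k (1::real))) UNIV" by (rule prod.reindex[OF i])
  finally show ?thesis by (simp add: o_def)
qed

lemma nn_integral_prod_vec:
  fixes g :: "'n::finite \<Rightarrow> real \<Rightarrow> ennreal"
  assumes [measurable]: "\<And>k. g k \<in> borel_measurable borel"
  shows "(\<integral>\<^sup>+\<eta>. (\<Prod>k\<in>UNIV. g k (\<eta>$k)) \<partial>(lborel::(real^'n) measure)) = (\<Prod>k\<in>UNIV. \<integral>\<^sup>+u. g k u \<partial>lborel)"
proof -
  define f where "f b = g (SOME k. axis k (1::real) = b)" for b :: "real^'n"
  have fa: "f (axis k 1) = g k" for k
  proof -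
    have "(SOME k'. axis k' (1::real) = axis k 1) = k"
      by (rule some_equality) (auto simp: axis_eq_axis)
    then show ?thesis by (simp add: f_def)
  qed
  have "(\<integral>\<^sup>+\<eta>. (\<Prod>b\<in>Basis. f b (\<eta> \<bullet> b)) \<partial>(lborel::(real^'n) measure)) = (\<Prod>b\<in>Basis. \<integral>\<^sup>+u. f b u \<partial>lborel)"
    by (rule nn_integral_lborel_prod) (auto simp: f_def)
  then show ?thesis by (simp add: prod_Basis_vec fa inner_axis)
qed

lemma noise_props:
  fixes h :: "real \<Rightarrow> real"
  assumes hm[measurable]: "h \<in> borel_measurable borel" and h0: "\<And>u. 0 \<le> h u"
   and i0: "(\<integral>\<^sup>+u. ennreal (h u) \<partial>lborel) < \<infinity>"
   and i1: "(\<integral>\<^sup>+u. ennreal (h u * \<bar>u\<bar>) \<partial>lborel) < \<infinity>"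
   and N: "N = density lborel (\<lambda>\<eta>::real^'n. ennreal (\<Prod>k\<in>UNIV. h (\<eta>$k)))"
  shows "finite_measure N" "integrable N (\<lambda>\<eta>. \<eta>$m)"
proof -
  have fm[measurable]: "(\<lambda>\<eta>::real^'n. ennreal (\<Prod>k\<in>UNIV. h (\<eta>$k))) \<in> borel_measurable borel"
    by measurable
  have pe: "ennreal (\<Prod>k\<in>UNIV. h (\<eta>$k)) = (\<Prod>k\<in>UNIV. ennreal (h (\<eta>$k)))" for \<eta> :: "real^'n"
    by (simp add: prod_ennreal h0)
  have "emeasure N (space N) = (\<integral>\<^sup>+\<eta>. ennreal (\<Prod>k\<in>UNIV. h (\<eta>$k)) \<partial>(lborel::(real^'n) measure))"
    unfolding N by (simp add: emeasure_density)
  also have "\<dots> = (\<Prod>k\<in>(UNIV::'n set). \<integral>\<^sup>+u. ennreal (h u) \<partial>lborel)"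
    unfolding pe by (rule nn_integral_prod_vec) measurable
  also have "\<dots> < \<infinity>" by (rule ennreal_prod_lt_top) (use i0 in auto)
  finally show "finite_measure N" by (intro finite_measureI) simp
  have sN: "sets N = sets borel" unfolding N by simp
  have mm: "(\<lambda>\<eta>::real^'n. \<eta>$m) \<in> borel_measurable N"
    by (subst measurable_cong_sets[OF sN refl]) simp
  define g where "g k u = ennreal (h u * (if k = m then \<bar>u\<bar> else 1))" for k u
  have [measurable]: "g k \<in> borel_measurable borel" for k unfolding g_def by measurable
  have "(\<integral>\<^sup>+\<eta>. ennreal (norm (\<eta>$m)) \<partial>N) = (\<integral>\<^sup>+\<eta>. ennreal (\<Prod>k\<in>UNIV. h (\<eta>$k)) * ennreal (norm (\<eta>$m)) \<partial>(lborel::(real^'n) measure))"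
    unfolding N by (rule nn_integral_density) measurable
  also have "\<dots> = (\<integral>\<^sup>+\<eta>. (\<Prod>k\<in>UNIV. g k (\<eta>$k)) \<partial>(lborel::(real^'n) measure))"
  proof (rule nn_integral_cong)
    fix \<eta> :: "real^'n"
    have "(\<Prod>k\<in>UNIV. h (\<eta>$k) * (if k = m then \<bar>\<eta>$k\<bar> else 1)) = (\<Prod>k\<in>UNIV. h (\<eta>$k)) * \<bar>\<eta>$m\<bar>"
      by (simp add: prod.distrib)
    then show "ennreal (\<Prod>k\<in>UNIV. h (\<eta>$k)) * ennreal (norm (\<eta>$m)) = (\<Prod>k\<in>UNIV. g k (\<eta>$k))"
      unfolding g_def by (simp add: prod_ennreal h0 ennreal_mult[symmetric] prod_nonneg)
  qed
  also have "\<dots> = (\<Prod>k\<in>UNIV. \<integral>\<^sup>+u. g k u \<partial>lborel)"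
    by (rule nn_integral_prod_vec) measurable
  also have "\<dots> < \<infinity>"
  proof (rule ennreal_prod_lt_top)
    fix k :: 'n
    show "(\<integral>\<^sup>+u. g k u \<partial>lborel) < \<infinity>"
      using i0 i1 by (cases "k = m") (auto simp: g_def)
  qed simp
  finally have "(\<integral>\<^sup>+\<eta>. ennreal (norm (\<eta>$m)) \<partial>N) < \<infinity>" .
  then show "integrable N (\<lambda>\<eta>. \<eta>$m)" using mm by (simp add: integrable_iff_bounded)
qed



lemma prod_inv_reindex:
  fixes \<tau> :: "'n::finite \<Rightarrow> 'n" assumes inv: "\<And>k. \<tau> (\<tau> k) = k"
  shows "(\<Prod>k\<in>UNIV. g (\<tau> k)) = (\<Prod>k\<in>UNIV. (g k :: 'a::comm_monoid_mult))"
  by (rule prod.reindex_bij_witness[of _ \<tau> \<tau>]) (auto simp: inv)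

lemma sum_inv_reindex:
  fixes \<tau> :: "'n::finite \<Rightarrow> 'n" assumes inv: "\<And>k. \<tau> (\<tau> k) = k"
  shows "(\<Sum>k\<in>UNIV. g (\<tau> k)) = (\<Sum>k\<in>UNIV. (g k :: 'a::comm_monoid_add))"
  by (rule sum.reindex_bij_witness[of _ \<tau> \<tau>]) (auto simp: inv)

lemma perm_meas[measurable]: "(\<lambda>v::real^'n. \<chi> k. v $ \<tau> k) \<in> borel_measurable borel"
  by (intro borel_measurable_continuous_onI continuous_intros)

lemma perm_lborel:
  fixes \<tau> :: "'n::finite \<Rightarrow> 'n" assumes inv: "\<And>k. \<tau> (\<tau> k) = k"
  shows "distr lborel borel (\<lambda>v::real^'n. \<chi> k. v $ \<tau> k) = lborel"
proof -
  let ?S = "\<lambda>v::real^'n. \<chi> k. v $ \<tau> k"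
  have "lborel = distr lborel borel ?S"
  proof (rule lborel_eqI)
    fix l u :: "real^'n"
    assume le: "\<And>b. b \<in> Basis \<Longrightarrow> l \<bullet> b \<le> u \<bullet> b"
    have lek: "l$k \<le> u$k" for k
      using le[of "axis k 1"] by (auto simp: inner_axis Basis_vec_def)
    have pre: "?S -` box l u = box (?S l) (?S u)"
      unfolding mem_box_cart set_eq_iff
      by (auto simp: mem_box_cart) (metis inv)+
    have "emeasure (distr lborel borel ?S) (box l u) = emeasure lborel (box (?S l) (?S u))"
      by (subst emeasure_distr) (auto simp: pre)
    also have "\<dots> = (\<Prod>b\<in>Basis. (?S u - ?S l) \<bullet> b)"
      by (rule emeasure_lborel_box) (auto simp: Basis_vec_def inner_axis lek)
    also have "\<dots> = (\<Prod>b\<in>Basis. (u - l) \<bullet> b)"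
      unfolding prod_Basis_vec by (simp add: inner_axis prod_inv_reindex[OF inv, of "\<lambda>k. u$k - l$k"])
    finally show "emeasure (distr lborel borel ?S) (box l u) = (\<Prod>b\<in>Basis. (u - l) \<bullet> b)" .
  qed simp
  then show ?thesis by simp
qed

lemma affperm_lborel:
  fixes \<tau> :: "'n::finite \<Rightarrow> 'n" assumes inv: "\<And>k. \<tau> (\<tau> k) = k"
  shows "distr lborel borel (\<lambda>v::real^'n. (\<chi> k. v $ \<tau> k) + a) = lborel"
proof -
  have "distr lborel borel (\<lambda>v::real^'n. (\<chi> k. v $ \<tau> k) + a)
      = distr (distr lborel borel (\<lambda>v::real^'n. \<chi> k. v $ \<tau> k)) borel ((+) a)"
    by (subst distr_distr) (auto simp: o_def add.commute)
  also have "\<dots> = lborel" by (simp add: perm_lborel[OF inv] lborel_distr_plus)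
  finally show ?thesis .
qed

lemma sym_integral_nonneg:
  fixes f F \<phi> :: "real^'n \<Rightarrow> _"
  assumes fm[measurable]: "f \<in> borel_measurable borel" and f0: "\<And>\<eta>. 0 \<le> f \<eta>"
   and \<phi>m[measurable]: "\<phi> \<in> borel_measurable borel" and pres: "distr lborel borel \<phi> = lborel"
   and Fm[measurable]: "F \<in> borel_measurable borel"
   and intF: "integrable (density lborel (\<lambda>\<eta>. ennreal (f \<eta>))) F"
   and anti: "\<And>\<eta>. F (\<phi> \<eta>) = - F \<eta>"
   and sign: "\<And>\<eta>. 0 \<le> (f \<eta> - f (\<phi> \<eta>)) * (F \<eta> :: real)"
  shows "0 \<le> integral\<^sup>L (density lborel (\<lambda>\<eta>. ennreal (f \<eta>))) F"
proof -
  let ?G = "\<lambda>\<eta>. f \<eta> * F \<eta>"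
  have Gm[measurable]: "?G \<in> borel_measurable borel" by measurable
  have i1: "integral\<^sup>L (density lborel (\<lambda>\<eta>. ennreal (f \<eta>))) F = integral\<^sup>L lborel ?G"
    by (subst integral_density) (auto simp: f0)
  have iG: "integrable lborel ?G"
    using intF by (subst (asm) integrable_density) (auto simp: f0)
  have iGphi: "integrable lborel (\<lambda>\<eta>. ?G (\<phi> \<eta>))"
    using integrable_distr_eq[of \<phi> lborel borel ?G] iG pres by simp
  have e: "integral\<^sup>L lborel ?G = integral\<^sup>L lborel (\<lambda>\<eta>. ?G (\<phi> \<eta>))"
    using integral_distr[of \<phi> lborel borel ?G] pres by simp
  have Gphi: "?G (\<phi> \<eta>) = - (f (\<phi> \<eta>) * F \<eta>)" for \<eta> by (simp add: anti)
  have i2: "integrable lborel (\<lambda>\<eta>. f (\<phi> \<eta>) * F \<eta>)"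
    using integrable_minus[OF iGphi] by (simp add: Gphi)
  have "0 \<le> integral\<^sup>L lborel (\<lambda>\<eta>. (f \<eta> - f (\<phi> \<eta>)) * F \<eta>)"
    by (rule Bochner_Integration.integral_nonneg) (rule sign)
  also have "integral\<^sup>L lborel (\<lambda>\<eta>. (f \<eta> - f (\<phi> \<eta>)) * F \<eta>)
     = integral\<^sup>L lborel ?G - integral\<^sup>L lborel (\<lambda>\<eta>. f (\<phi> \<eta>) * F \<eta>)"
    using Bochner_Integration.integral_diff[OF iG i2] by (simp add: left_diff_distrib)
  also have "integral\<^sup>L lborel (\<lambda>\<eta>. f (\<phi> \<eta>) * F \<eta>) = - integral\<^sup>L lborel ?G"
    using e by (simp add: Gphi)
  finally show ?thesis using i1 by simp
qed



definition hL :: "real \<Rightarrow> real \<Rightarrow> real" where "hL b u = exp (- \<bar>u\<bar> / b) / (2 * b)"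

lemma hL_meas[measurable]: "hL b \<in> borel_measurable borel"
  unfolding hL_def by measurable

lemma hL_nonneg: "0 < b \<Longrightarrow> 0 \<le> hL b u" unfolding hL_def by simp

lemma hL_cmp:
  assumes b: "0 < b" and d: "0 \<le> d" and uv: "u \<le> v + d"
  shows "hL b (v + d) * hL b (u - d) \<le> hL b u * hL b v"
proof -
  have "\<bar>u\<bar> + \<bar>v\<bar> \<le> \<bar>v + d\<bar> + \<bar>u - d\<bar>" using d uv by linarith
  then have "(\<bar>u\<bar> + \<bar>v\<bar>) / b \<le> (\<bar>v + d\<bar> + \<bar>u - d\<bar>) / b"
    using b by (simp add: divide_right_mono)
  then have "- \<bar>v + d\<bar> / b + - \<bar>u - d\<bar> / b \<le> - \<bar>u\<bar> / b + - \<bar>v\<bar> / b"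
    by (simp add: add_divide_distrib)
  then have "exp (- \<bar>v + d\<bar> / b) * exp (- \<bar>u - d\<bar> / b) \<le> exp (- \<bar>u\<bar> / b) * exp (- \<bar>v\<bar> / b)"
    by (simp add: exp_add[symmetric])
  then show ?thesis unfolding hL_def using b
    by (simp add: field_simps)
qed

lemma hL_integrals:
  assumes b: "0 < b"
  shows "(\<integral>\<^sup>+u. ennreal (hL b u) \<partial>lborel) < \<infinity>"
        "(\<integral>\<^sup>+u. ennreal (hL b u * \<bar>u\<bar>) \<partial>lborel) < \<infinity>"
proof -
  define l where "l = 1 / b"
  have l: "0 < l" using b by (simp add: l_def)
  define E where "E x = erlang_density 0 l x" for x
  define q where "q x = ennreal (E x) + ennreal (E x * x)" for x
  have [measurable]: "E \<in> borel_measurable borel" unfolding E_def by measurable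
  have [measurable]: "q \<in> borel_measurable borel" unfolding q_def by measurable
  have a: "(\<integral>\<^sup>+x. ennreal (E x) \<partial>lborel) < \<infinity>"
    using nn_integral_erlang_ith_moment[OF l, of 0 0] unfolding E_def by simp
  have a1: "(\<integral>\<^sup>+x. ennreal (E x * x) \<partial>lborel) < \<infinity>"
    using nn_integral_erlang_ith_moment[OF l, of 0 1] unfolding E_def by simp
  have q1: "(\<integral>\<^sup>+x. q x \<partial>lborel) < \<infinity>"
    unfolding q_def using a a1 by (subst nn_integral_add) auto
  have q2: "(\<integral>\<^sup>+x. q (- x) \<partial>lborel) < \<infinity>"
    using q1 nn_integral_real_affine[of q "-1" 0] by simp
  have Q: "(\<integral>\<^sup>+x. q x + q (- x) \<partial>lborel) < \<infinity>"
    using q1 q2 by (subst nn_integral_add) auto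
  have Epos: "E u = exp (- \<bar>u\<bar> / b) / b" if "0 \<le> u" for u
    using that b by (simp add: E_def erlang_density_def l_def field_simps)
  have Eneg: "E (- u) = exp (- \<bar>u\<bar> / b) / b" if "u < 0" for u
    using that b by (simp add: E_def erlang_density_def l_def field_simps)
  have E0: "0 \<le> E u" for u unfolding E_def using l by simp
  have bnd: "ennreal (hL b u) \<le> q u + q (- u) \<and> ennreal (hL b u * \<bar>u\<bar>) \<le> q u + q (- u)" for u
  proof (cases "0 \<le> u")
    case True
    have "hL b u \<le> E u" "hL b u * \<bar>u\<bar> \<le> E u * u"
      using True b by (auto simp: Epos hL_def field_simps intro!: mult_right_mono)
    moreover have "ennreal (E u) \<le> q u" "ennreal (E u * u) \<le> q u" unfolding q_def by auto
    ultimately show ?thesis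
      by (meson add_increasing2 ennreal_leI order_trans zero_le)
  next
    case False
    then have u: "u < 0" by simp
    have "hL b u \<le> E (- u)" "hL b u * \<bar>u\<bar> \<le> E (- u) * (- u)"
      using u b by (auto simp: Eneg hL_def field_simps intro!: mult_right_mono)
    moreover have "ennreal (E (- u)) \<le> q (- u)" "ennreal (E (- u) * (- u)) \<le> q (- u)" unfolding q_def by auto
    ultimately show ?thesis
      by (meson add_increasing ennreal_leI order_trans zero_le)
  qed
  have "(\<integral>\<^sup>+u. ennreal (hL b u) \<partial>lborel) \<le> (\<integral>\<^sup>+x. q x + q (- x) \<partial>lborel)"
    by (rule nn_integral_mono) (use bnd in blast)
  then show "(\<integral>\<^sup>+u. ennreal (hL b u) \<partial>lborel) < \<infinity>" using Q by (rule le_less_trans)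
  have "(\<integral>\<^sup>+u. ennreal (hL b u * \<bar>u\<bar>) \<partial>lborel) \<le> (\<integral>\<^sup>+x. q x + q (- x) \<partial>lborel)"
    by (rule nn_integral_mono) (use bnd in blast)
  then show "(\<integral>\<^sup>+u. ennreal (hL b u * \<bar>u\<bar>) \<partial>lborel) < \<infinity>" using Q by (rule le_less_trans)
qed

lemma hG_cmp:
  assumes s: "0 < \<sigma>" and d: "0 \<le> d" and uv: "u \<le> v + d"
  shows "normal_density 0 \<sigma> (v + d) * normal_density 0 \<sigma> (u - d) \<le> normal_density 0 \<sigma> u * normal_density 0 \<sigma> v"
proof -
  have "0 \<le> d * (v + d - u)" using d uv by simp
  then have "u^2 + v^2 \<le> (v + d)^2 + (u - d)^2" by (simp add: power2_eq_square algebra_simps)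
  then have "(u^2 + v^2) / (2 * \<sigma>^2) \<le> ((v + d)^2 + (u - d)^2) / (2 * \<sigma>^2)"
    using s by (simp add: divide_right_mono)
  then have "exp (- (((v + d)^2 + (u - d)^2) / (2 * \<sigma>^2))) \<le> exp (- ((u^2 + v^2) / (2 * \<sigma>^2)))"
    by simp
  then have "exp (- ((v + d)^2) / (2 * \<sigma>^2)) * exp (- ((u - d)^2) / (2 * \<sigma>^2)) \<le> exp (- (u^2) / (2 * \<sigma>^2)) * exp (- (v^2) / (2 * \<sigma>^2))"
    by (simp add: exp_add[symmetric] add_divide_distrib)
  then show ?thesis unfolding normal_density_def
    by (simp add: mult.assoc mult.left_commute divide_right_mono)
qed

lemma hG_integrals:
  assumes s: "0 < \<sigma>"
  shows "(\<integral>\<^sup>+u. ennreal (normal_density 0 \<sigma> u) \<partial>lborel) < \<infinity>"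
        "(\<integral>\<^sup>+u. ennreal (normal_density 0 \<sigma> u * \<bar>u\<bar>) \<partial>lborel) < \<infinity>"
proof -
  have "integrable lborel (normal_density 0 \<sigma>)" using s by simp
  then show "(\<integral>\<^sup>+u. ennreal (normal_density 0 \<sigma> u) \<partial>lborel) < \<infinity>"
    by (simp add: integrable_iff_bounded)
  have "integrable lborel (\<lambda>x. normal_density 0 \<sigma> x * \<bar>x - 0\<bar>^1)"
    using integrable_normal_moment_abs[OF s] by blast
  then show "(\<integral>\<^sup>+u. ennreal (normal_density 0 \<sigma> u * \<bar>u\<bar>) \<partial>lborel) < \<infinity>"
    by (simp add: integrable_iff_bounded abs_mult)
qed



lemma closest_point_char:
  fixes S :: "'a::euclidean_space set"
  assumes "convex S" "closed S" "p \<in> S" "\<And>q. q \<in> S \<Longrightarrow> inner (y - p) (q - p) \<le> 0"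
  shows "closest_point S y = p"
proof -
  have "dist y p \<le> dist y q" if q: "q \<in> S" for q
  proof -
    have "(norm (y - p))^2 \<le> (norm (y - q))^2"
    proof -
      have "y - q = (y - p) - (q - p)" by simp
      then have "(norm (y - q))^2 = (norm (y-p))^2 - 2 * inner (y-p) (q-p) + (norm (q-p))^2"
        by (simp add: power2_norm_eq_inner inner_diff_left inner_diff_right inner_commute)
      then show ?thesis using assms(4)[OF q] by (smt (verit) zero_le_power2)
    qed
    then show ?thesis by (simp add: dist_norm power2_le_iff_abs_le)
  qed
  then show ?thesis using closest_point_unique[OF assms(1-3)] by auto
qed

lemma closed_K_S: "closed (K_S C :: (real^'n) set)"
  unfolding K_S_def by (intro closed_Collect_eq continuous_intros) 

lemma convex_K_S: "convex (K_S C :: (real^'n) set)"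
  unfolding K_S_def convex_def by (auto simp: sum.distrib sum_distrib_left[symmetric] distrib_right[symmetric])

lemma closed_K_Splus: "closed (K_Splus C :: (real^'n) set)"
proof -
  have "K_Splus C = K_S C \<inter> (\<Inter>i. {v::real^'n. 0 \<le> v $ i})" unfolding K_Splus_def by auto
  moreover have "closed {v::real^'n. 0 \<le> v $ i}" for i
    by (intro closed_Collect_le continuous_intros)
  moreover have "closed (\<Inter>i. {v::real^'n. 0 \<le> v $ i})"
    by (rule closed_INT) (use calculation in auto)
  ultimately show ?thesis using closed_K_S[of C] by (metis closed_Int)
qed

lemma convex_K_Splus: "convex (K_Splus C :: (real^'n) set)"
  unfolding K_Splus_def K_S_def convex_def by (auto simp: sum.distrib sum_distrib_left[symmetric] distrib_right[symmetric])

lemma nonempty_K_Splus: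
  assumes "C \<ge> 0" shows "K_Splus C \<noteq> ({} :: (real^'n) set)"
proof -
  obtain k :: 'n where True by simp
  have "axis k C \<in> K_Splus C"
    unfolding K_Splus_def K_S_def using assms
    by (auto simp: axis_def sum.delta)
  then show ?thesis by auto
qed

lemma proj_S_eq:
  "proj_S C (y::real^'n) = (\<chi> k. y$k - ((\<Sum>l\<in>UNIV. y$l) - C) / real CARD('n))"
proof -
  define c where "c = ((\<Sum>l\<in>UNIV. y$l) - C) / real CARD('n)"
  define p :: "real^'n" where "p = (\<chi> k. y$k - c)"
  have sp: "(\<Sum>k\<in>UNIV. p$k) = C"
    unfolding p_def c_def by (simp add: sum_subtractf)
  have "closest_point (K_S C) y = p"
  proof (rule closest_point_char[OF convex_K_S closed_K_S])
    show "p \<in> K_S C" using sp by (simp add: K_S_def)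
    fix q :: "real^'n" assume "q \<in> K_S C"
    then have sq: "(\<Sum>k\<in>UNIV. q$k) = C" by (simp add: K_S_def)
    have "inner (y - p) (q - p) = (\<Sum>k\<in>UNIV. c * (q$k - p$k))"
      unfolding inner_vec_def p_def by simp
    also have "\<dots> = c * ((\<Sum>k\<in>UNIV. q$k) - (\<Sum>k\<in>UNIV. p$k))"
      by (simp add: sum_distrib_left[symmetric] sum_subtractf)
    also have "\<dots> = 0" using sq sp by simp
    finally show "inner (y - p) (q - p) \<le> 0" by simp
  qed
  then show ?thesis unfolding proj_S_def p_def c_def by simp
qed

lemma sum_proj_S: "(\<Sum>k\<in>UNIV. proj_S C (y::real^'n) $ k) = C"
  unfolding proj_S_eq by (simp add: sum_subtractf)

definition phiT :: "real^'n \<Rightarrow> real \<Rightarrow> real" where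
  "phiT z t = (\<Sum>i\<in>UNIV. max (z$i - t) 0)"

lemma T_thr_unique_aux:
  fixes z :: "real^'n"
  assumes C: "C > 0" and t1: "phiT z t1 = C" and t2: "phiT z t2 = C" and lt: "t1 < t2"
  shows False
proof -
  have "\<exists>k. z$k > t2"
  proof (rule ccontr)
    assume "\<not> ?thesis"
    then have "phiT z t2 = 0" unfolding phiT_def by (auto intro!: sum.neutral simp: not_less)
    then show False using t2 C by simp
  qed
  then obtain k where k: "z$k > t2" by blast
  have "phiT z t2 < phiT z t1" unfolding phiT_def
    apply (rule sum_strict_mono_ex1)
      apply simp
     apply (use lt in auto)[1]
    using lt k by (intro bexI[of _ k]) auto
  then show False using t1 t2 by simp
qed

lemma T_thr_exists:
  fixes z :: "real^'n"
  assumes C: "C > 0" and sz: "(\<Sum>k\<in>UNIV. z$k) = C"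
  shows "\<exists>t. 0 \<le> t \<and> phiT z t = C"
proof -
  define M where "M = (\<Sum>k\<in>UNIV. \<bar>z$k\<bar>)"
  have zM: "z$k \<le> M" for k
  proof -
    have "\<bar>z$k\<bar> \<le> M" unfolding M_def by (rule member_le_sum) auto
    then show ?thesis by simp
  qed
  have M0: "0 \<le> M" unfolding M_def by (simp add: sum_nonneg)
  have "phiT z M = 0" unfolding phiT_def using zM by (auto intro!: sum.neutral)
  moreover have "C \<le> phiT z 0" unfolding phiT_def using sz[symmetric]
    by (simp add: sum_mono)
  moreover have "continuous_on {0..M} (phiT z)" unfolding phiT_def
    by (intro continuous_intros)
  ultimately obtain t where "0 \<le> t" "t \<le> M" "phiT z t = C"
    using IVT2'[of "phiT z" M C 0] C M0 by auto
  then show ?thesis by auto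
qed

lemma T_thr_eq:
  fixes z :: "real^'n"
  assumes C: "C > 0" and t: "0 \<le> t" "phiT z t = C"
  shows "T_thr C z = t"
  unfolding T_thr_def
proof (rule the_equality)
  show "0 \<le> t \<and> (\<Sum>i\<in>UNIV. max (z $ i - t) 0) = C" using t by (simp add: phiT_def)
  fix s assume "0 \<le> s \<and> (\<Sum>i\<in>UNIV. max (z $ i - s) 0) = C"
  then have s: "phiT z s = C" by (simp add: phiT_def)
  show "s = t"
    using T_thr_unique_aux[OF C s t(2)] T_thr_unique_aux[OF C t(2) s] by (cases s t rule: linorder_cases) auto
qed

lemma T_thr_props:
  fixes z :: "real^'n"
  assumes C: "C > 0" and sz: "(\<Sum>k\<in>UNIV. z$k) = C"
  shows "0 \<le> T_thr C z" "phiT z (T_thr C z) = C"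
proof -
  obtain t where t: "0 \<le> t" "phiT z t = C" using T_thr_exists[OF assms] by blast
  have "T_thr C z = t" by (rule T_thr_eq[OF C t])
  then show "0 \<le> T_thr C z" "phiT z (T_thr C z) = C" using t by auto
qed

lemma T_thr_bound:
  fixes z :: "real^'n"
  assumes C: "C > 0" and sz: "(\<Sum>k\<in>UNIV. z$k) = C"
  shows "T_thr C z \<le> (\<Sum>k\<in>UNIV. \<bar>z$k\<bar>)"
proof -
  let ?t = "T_thr C z"
  have "\<exists>k. z$k > ?t"
  proof (rule ccontr)
    assume "\<not> ?thesis"
    then have "phiT z ?t = 0" unfolding phiT_def by (auto intro!: sum.neutral simp: not_less)
    then show False using T_thr_props[OF assms] C by simp
  qed
  then obtain k where k: "z$k > ?t" by blast
  have "\<bar>z$k\<bar> \<le> (\<Sum>k\<in>UNIV. \<bar>z$k\<bar>)" by (rule member_le_sum) auto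
  then show ?thesis using k by simp
qed

lemma proj_Splus_eq:
  fixes y :: "real^'n"
  assumes C: "C > 0"
  shows "proj_Splus C y = (\<chi> k. max (proj_S C y $ k - T_thr C (proj_S C y)) 0)"
proof -
  define z where "z = proj_S C y"
  define c where "c = ((\<Sum>l\<in>UNIV. y$l) - C) / real CARD('n)"
  have zc: "z$k = y$k - c" for k unfolding z_def c_def proj_S_eq by simp
  have sz: "(\<Sum>k\<in>UNIV. z$k) = C" unfolding z_def by (rule sum_proj_S)
  define t where "t = T_thr C z"
  note tp = T_thr_props[OF C sz, folded t_def]
  define p :: "real^'n" where "p = (\<chi> k. max (z$k - t) 0)"
  have sp: "(\<Sum>k\<in>UNIV. p$k) = C" using tp(2) unfolding p_def phiT_def by simp
  have "closest_point (K_Splus C) y = p"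
  proof (rule closest_point_char[OF convex_K_Splus closed_K_Splus])
    show "p \<in> K_Splus C" using sp by (simp add: K_Splus_def K_S_def p_def)
    fix q :: "real^'n" assume "q \<in> K_Splus C"
    then have sq: "(\<Sum>k\<in>UNIV. q$k) = C" and q0: "\<And>k. 0 \<le> q$k" by (auto simp: K_Splus_def K_S_def)
    have le: "(y$k - p$k) * (q$k - p$k) \<le> (t + c) * (q$k - p$k)" for k
    proof (cases "z$k \<ge> t")
      case True
      then have "y$k - p$k = t + c" using zc[of k] by (simp add: p_def)
      then show ?thesis by simp
    next
      case False
      then have "p$k = 0" "y$k \<le> t + c" using zc[of k] by (auto simp: p_def)
      then show ?thesis using q0[of k] by (simp add: mult_right_mono)
    qed
    have "inner (y - p) (q - p) = (\<Sum>k\<in>UNIV. (y$k - p$k) * (q$k - p$k))"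
      unfolding inner_vec_def by simp
    also have "\<dots> \<le> (\<Sum>k\<in>UNIV. (t + c) * (q$k - p$k))"
      by (rule sum_mono) (rule le)
    also have "\<dots> = (t + c) * ((\<Sum>k\<in>UNIV. q$k) - (\<Sum>k\<in>UNIV. p$k))"
      by (simp add: sum_distrib_left[symmetric] sum_subtractf)
    also have "\<dots> = 0" using sq sp by simp
    finally show "inner (y - p) (q - p) \<le> 0" .
  qed
  then show ?thesis unfolding proj_Splus_def p_def t_def z_def by simp
qed



lemma T_thr_exists_gt:
  fixes z :: "real^'n"
  assumes C: "C > 0" and sz: "(\<Sum>k\<in>UNIV. z$k) = C"
  shows "\<exists>k. z$k > T_thr C z"
proof (rule ccontr)
  assume "\<not> ?thesis"
  then have "phiT z (T_thr C z) = 0" unfolding phiT_def by (auto intro!: sum.neutral simp: not_less)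
  then show False using T_thr_props[OF assms] C by simp
qed

lemma gmono: "0 \<le> t \<Longrightarrow> a \<le> b \<Longrightarrow> max (b - t) 0 - max b 0 \<le> max (a - t) 0 - max (a::real) 0"
  by (auto simp: max_def)

lemma gbound: "0 \<le> t \<Longrightarrow> max (a - t) 0 - max a 0 - (max (b - t) 0 - max b 0) \<le> (t::real)"
  by (auto simp: max_def)

definition swv :: "('n \<Rightarrow> 'n) \<Rightarrow> real^'n \<Rightarrow> real^'n" where "swv \<tau> v = (\<chi> k. v $ \<tau> k)"

lemma proj_S_swv:
  fixes \<tau> :: "'n::finite \<Rightarrow> 'n" assumes inv: "\<And>k. \<tau> (\<tau> k) = k"
  shows "proj_S C (swv \<tau> y) = swv \<tau> (proj_S C y)"
  unfolding proj_S_eq swv_def by (simp add: sum_inv_reindex[OF inv, of "\<lambda>l. y$l"])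

lemma T_thr_swv:
  fixes \<tau> :: "'n::finite \<Rightarrow> 'n" assumes inv: "\<And>k. \<tau> (\<tau> k) = k"
    and C: "C > 0" and sz: "(\<Sum>k\<in>UNIV. z$k) = C"
  shows "T_thr C (swv \<tau> z) = T_thr C z"
proof -
  have "phiT (swv \<tau> z) s = phiT z s" for s unfolding phiT_def swv_def
    by (simp add: sum_inv_reindex[OF inv, of "\<lambda>l. max (z$l - s) 0"])
  then show ?thesis using T_thr_props[OF C sz] T_thr_eq[OF C, of "T_thr C z" "swv \<tau> z"] by simp
qed

lemma core:
  fixes h :: "real \<Rightarrow> real" and x :: "real^'n" and N :: "(real^'n) measure"
  assumes hm[measurable]: "h \<in> borel_measurable borel" and h0: "\<And>u. 0 \<le> h u"
   and i0: "(\<integral>\<^sup>+u. ennreal (h u) \<partial>lborel) < \<infinity>"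
   and i1: "(\<integral>\<^sup>+u. ennreal (h u * \<bar>u\<bar>) \<partial>lborel) < \<infinity>"
   and cmp: "\<And>u v d. 0 \<le> d \<Longrightarrow> u \<le> v + d \<Longrightarrow> h (v + d) * h (u - d) \<le> h u * h v"
   and N: "N = density lborel (\<lambda>\<eta>::real^'n. ennreal (\<Prod>k\<in>UNIV. h (\<eta>$k)))"
   and C: "C > 0" and ij: "x $ i \<le> x $ j"
  shows "(bias N x (proj_Splus C) $ i - bias N x (proj_Splus C) $ j
           \<ge> bias N x (\<lambda>y. pos_part (proj_S C y)) $ i - bias N x (\<lambda>y. pos_part (proj_S C y)) $ j)
    \<and> (bias N x (proj_Splus C) $ i - bias N x (proj_Splus C) $ j
           \<le> bias N x (\<lambda>y. pos_part (proj_S C y)) $ i - bias N x (\<lambda>y. pos_part (proj_S C y)) $ j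
              + (\<integral>\<eta>. T_thr C (proj_S C (x + \<eta>)) \<partial>N))"
proof -
  define z where "z \<eta> = proj_S C (x + \<eta>)" for \<eta>
  define P where "P \<eta> = proj_Splus C (x + \<eta>)" for \<eta>
  define Q where "Q \<eta> = pos_part (z \<eta>)" for \<eta>
  define t where "t \<eta> = T_thr C (z \<eta>)" for \<eta>
  define n where "n = real CARD('n)"
  have sz: "(\<Sum>k\<in>UNIV. z \<eta> $ k) = C" for \<eta> unfolding z_def by (rule sum_proj_S)
  have Pk: "P \<eta> $ k = max (z \<eta> $ k - t \<eta>) 0" for \<eta> k
    unfolding P_def z_def t_def by (simp add: proj_Splus_eq[OF C])
  have Qk: "Q \<eta> $ k = max (z \<eta> $ k) 0" for \<eta> k unfolding Q_def pos_part_def by simp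
  have zk: "z \<eta> $ k = x$k + \<eta>$k - ((\<Sum>l\<in>UNIV. x$l + \<eta>$l) - C) / n" for \<eta> k
    unfolding z_def proj_S_eq n_def by simp
  have t0: "0 \<le> t \<eta>" for \<eta> unfolding t_def using T_thr_props(1)[OF C sz] by simp
  have tb: "t \<eta> \<le> (\<Sum>k\<in>UNIV. \<bar>z \<eta> $ k\<bar>)" for \<eta>
    unfolding t_def using T_thr_bound[OF C sz] by simp
  have neS: "K_S C \<noteq> ({} :: (real^'n) set)" using nonempty_K_Splus[of C] C unfolding K_Splus_def by auto
  have neP: "K_Splus C \<noteq> ({} :: (real^'n) set)" using nonempty_K_Splus[of C] C by auto
  have zc: "continuous_on UNIV z"
    unfolding z_def proj_S_def
    by (rule continuous_on_compose2[OF continuous_on_closest_point[OF convex_K_S closed_K_S neS]])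
       (auto intro: continuous_intros)
  have Pc: "continuous_on UNIV P"
    unfolding P_def proj_Splus_def
    by (rule continuous_on_compose2[OF continuous_on_closest_point[OF convex_K_Splus closed_K_Splus neP]])
       (auto intro: continuous_intros)
  have Qc: "continuous_on UNIV Q"
    unfolding Q_def pos_part_def by (intro continuous_intros zc)
  have sN: "sets N = sets borel" unfolding N by simp
  have Pm: "P \<in> borel_measurable N"
    by (subst measurable_cong_sets[OF sN refl]) (rule borel_measurable_continuous_onI[OF Pc])
  have Qm: "Q \<in> borel_measurable N"
    by (subst measurable_cong_sets[OF sN refl]) (rule borel_measurable_continuous_onI[OF Qc])
  have dm: "(\<lambda>\<eta>. z \<eta> $ k - P \<eta> $ k) \<in> borel_measurable N" for k
    by (subst measurable_cong_sets[OF sN refl]) (intro borel_measurable_continuous_onI continuous_intros zc Pc)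
  have tMax: "t \<eta> = Max ((\<lambda>k. z \<eta> $ k - P \<eta> $ k) ` UNIV)" for \<eta>
  proof -
    obtain k0 where k0: "z \<eta> $ k0 > t \<eta>" using T_thr_exists_gt[OF C sz] unfolding t_def by blast
    have "Max ((\<lambda>k. z \<eta> $ k - P \<eta> $ k) ` UNIV) = t \<eta>"
    proof (rule Max_eqI)
      show "finite ((\<lambda>k. z \<eta> $ k - P \<eta> $ k) ` UNIV)" by simp
      fix y assume "y \<in> (\<lambda>k. z \<eta> $ k - P \<eta> $ k) ` UNIV"
      then show "y \<le> t \<eta>" by (auto simp: Pk)
    next
      show "t \<eta> \<in> (\<lambda>k. z \<eta> $ k - P \<eta> $ k) ` UNIV"
        using k0 by (auto simp: Pk intro!: image_eqI[of _ _ k0])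
    qed
    then show ?thesis by simp
  qed
  have tm: "t \<in> borel_measurable N"
  proof -
    have "(\<lambda>\<eta>. Max ((\<lambda>k. z \<eta> $ k - P \<eta> $ k) ` UNIV)) \<in> borel_measurable N"
      by (rule borel_measurable_Max) (auto intro: dm)
    moreover have "t = (\<lambda>\<eta>. Max ((\<lambda>k. z \<eta> $ k - P \<eta> $ k) ` UNIV))" using tMax by auto
    ultimately show ?thesis by simp
  qed
  note np = noise_props[OF hm h0 i0 i1 N]
  interpret fin: finite_measure N by (rule np(1))
  have ie: "integrable N (\<lambda>\<eta>. \<eta>$m)" for m by (rule np(2))
  have iz: "integrable N (\<lambda>\<eta>. z \<eta> $ k)" for k
    unfolding zk by (intro Bochner_Integration.integrable_diff Bochner_Integration.integrable_add integrable_divide_zero Bochner_Integration.integrable_sum fin.integrable_const ie)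
  have iB: "integrable N (\<lambda>\<eta>. \<Sum>k\<in>UNIV. \<bar>z \<eta> $ k\<bar>)" using iz by auto
  have iP: "integrable N P"
  proof (rule fin.integrable_const_bound[where B=C])
    show "AE \<eta> in N. norm (P \<eta>) \<le> C"
    proof (rule AE_I2)
      fix \<eta>
      have "P \<eta> \<in> K_Splus C" unfolding P_def proj_Splus_def
        by (rule closest_point_in_set[OF closed_K_Splus neP])
      then have s: "(\<Sum>k\<in>UNIV. P \<eta> $ k) = C" and nn: "\<And>k. 0 \<le> P \<eta> $ k" by (auto simp: K_Splus_def K_S_def)
      have "norm (P \<eta>) \<le> (\<Sum>k\<in>UNIV. \<bar>P \<eta> $ k\<bar>)" by (rule norm_le_l1_cart)
      also have "\<dots> = C" using s nn by (simp add: abs_of_nonneg)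
      finally show "norm (P \<eta>) \<le> C" .
    qed
  qed (rule Pm)
  have iQ: "integrable N Q"
  proof (rule Bochner_Integration.integrable_bound[OF iB Qm])
    show "AE \<eta> in N. norm (Q \<eta>) \<le> norm (\<Sum>k\<in>UNIV. \<bar>z \<eta> $ k\<bar>)"
    proof (rule AE_I2)
      fix \<eta>
      have "norm (Q \<eta>) \<le> (\<Sum>k\<in>UNIV. \<bar>Q \<eta> $ k\<bar>)" by (rule norm_le_l1_cart)
      also have "\<dots> \<le> (\<Sum>k\<in>UNIV. \<bar>z \<eta> $ k\<bar>)" by (rule sum_mono) (auto simp: Qk)
      also have "\<dots> = norm (\<Sum>k\<in>UNIV. \<bar>z \<eta> $ k\<bar>)" by (simp add: sum_nonneg)
      finally show "norm (Q \<eta>) \<le> norm (\<Sum>k\<in>UNIV. \<bar>z \<eta> $ k\<bar>)" .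
    qed
  qed
  have it: "integrable N t"
  proof (rule Bochner_Integration.integrable_bound[OF iB tm])
    show "AE \<eta> in N. norm (t \<eta>) \<le> norm (\<Sum>k\<in>UNIV. \<bar>z \<eta> $ k\<bar>)"
      using t0 tb by (auto intro!: AE_I2 simp: sum_nonneg)
  qed
  have iPk: "integrable N (\<lambda>\<eta>. P \<eta> $ k)" for k
    by (rule integrable_bounded_linear[OF bounded_linear_vec_nth[where i=k] iP])
  have iQk: "integrable N (\<lambda>\<eta>. Q \<eta> $ k)" for k
    by (rule integrable_bounded_linear[OF bounded_linear_vec_nth[where i=k] iQ])
  have cP: "(\<integral>\<eta>. P \<eta> \<partial>N) $ k = (\<integral>\<eta>. P \<eta> $ k \<partial>N)" for k
    using integral_bounded_linear[OF bounded_linear_vec_nth[where i=k] iP] by simp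
  have cQ: "(\<integral>\<eta>. Q \<eta> \<partial>N) $ k = (\<integral>\<eta>. Q \<eta> $ k \<partial>N)" for k
    using integral_bounded_linear[OF bounded_linear_vec_nth[where i=k] iQ] by simp
  have bP: "bias N x (proj_Splus C) = (\<integral>\<eta>. P \<eta> \<partial>N) - x" unfolding bias_def P_def by simp
  have bQ: "bias N x (\<lambda>y. pos_part (proj_S C y)) = (\<integral>\<eta>. Q \<eta> \<partial>N) - x" unfolding bias_def Q_def z_def by simp
  have bT: "(\<integral>\<eta>. T_thr C (proj_S C (x + \<eta>)) \<partial>N) = (\<integral>\<eta>. t \<eta> \<partial>N)" unfolding t_def z_def by simp
  define F where "F \<eta> = P \<eta> $ i - P \<eta> $ j - Q \<eta> $ i + Q \<eta> $ j" for \<eta>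
  have iF: "integrable N F" unfolding F_def using iPk iQk by auto
  have intF: "(\<integral>\<eta>. F \<eta> \<partial>N) = (\<integral>\<eta>. P \<eta> $ i \<partial>N) - (\<integral>\<eta>. P \<eta> $ j \<partial>N) - (\<integral>\<eta>. Q \<eta> $ i \<partial>N) + (\<integral>\<eta>. Q \<eta> $ j \<partial>N)"
    unfolding F_def using iPk iQk by simp
  have Fg: "F \<eta> = (max (z \<eta> $ i - t \<eta>) 0 - max (z \<eta> $ i) 0) - (max (z \<eta> $ j - t \<eta>) 0 - max (z \<eta> $ j) 0)" for \<eta>
    unfolding F_def Pk Qk by simp
  have upper: "(\<integral>\<eta>. F \<eta> \<partial>N) \<le> (\<integral>\<eta>. t \<eta> \<partial>N)"
    by (rule Bochner_Integration.integral_mono[OF iF it]) (simp add: Fg gbound t0)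
  have lower: "0 \<le> (\<integral>\<eta>. F \<eta> \<partial>N)"
  proof (cases "i = j")
    case True
    then have "F = (\<lambda>\<eta>. 0)" unfolding F_def by auto
    then show ?thesis by simp
  next
    case ne: False
    define \<tau> where "\<tau> k = (if k = i then j else if k = j then i else k)" for k
    have inv: "\<tau> (\<tau> k) = k" for k unfolding \<tau>_def by auto
    have \<tau>i: "\<tau> i = j" and \<tau>j: "\<tau> j = i" unfolding \<tau>_def using ne by auto
    have \<tau>o: "k \<noteq> i \<Longrightarrow> k \<noteq> j \<Longrightarrow> \<tau> k = k" for k unfolding \<tau>_def by auto
    define a where "a = swv \<tau> x - x"
    define \<phi> where "\<phi> v = (\<chi> k. v $ \<tau> k) + a" for v :: "real^'n"
    define f where "f \<eta> = (\<Prod>k\<in>UNIV. h (\<eta>$k))" for \<eta> :: "real^'n"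
    have xphi: "x + \<phi> \<eta> = swv \<tau> (x + \<eta>)" for \<eta>
      unfolding \<phi>_def a_def swv_def by (simp add: vec_eq_iff)
    have zphi: "z (\<phi> \<eta>) = swv \<tau> (z \<eta>)" for \<eta>
      unfolding z_def xphi by (rule proj_S_swv[OF inv])
    have tphi: "t (\<phi> \<eta>) = t \<eta>" for \<eta>
      unfolding t_def zphi by (rule T_thr_swv[OF inv C sz])
    have Fphi: "F (\<phi> \<eta>) = - F \<eta>" for \<eta>
      unfolding Fg tphi by (simp add: zphi swv_def \<tau>i \<tau>j)
    have fm[measurable]: "f \<in> borel_measurable borel" unfolding f_def by measurable
    have f0: "0 \<le> f \<eta>" for \<eta> unfolding f_def by (simp add: prod_nonneg h0)
    have phim[measurable]: "\<phi> \<in> borel_measurable borel"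
      unfolding \<phi>_def by (intro borel_measurable_continuous_onI continuous_intros)
    have pres: "distr lborel borel \<phi> = lborel"
      unfolding \<phi>_def by (rule affperm_lborel[OF inv])
    have Fm[measurable]: "F \<in> borel_measurable borel"
      unfolding F_def by (intro borel_measurable_continuous_onI continuous_intros Pc Qc)
    have N': "N = density lborel (\<lambda>\<eta>. ennreal (f \<eta>))" unfolding N f_def ..
    have fsplit: "f \<eta> = h (\<eta>$i) * h (\<eta>$j) * (\<Prod>k\<in>UNIV - {i} - {j}. h (\<eta>$k))" for \<eta>
    proof -
      have "f \<eta> = h (\<eta>$i) * (\<Prod>k\<in>UNIV - {i}. h (\<eta>$k))"
        unfolding f_def by (rule prod.remove) auto
      also have "(\<Prod>k\<in>UNIV - {i}. h (\<eta>$k)) = h (\<eta>$j) * (\<Prod>k\<in>UNIV - {i} - {j}. h (\<eta>$k))"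
        by (rule prod.remove) (use ne in auto)
      finally show ?thesis by (simp add: mult.assoc)
    qed
    have sign: "0 \<le> (f \<eta> - f (\<phi> \<eta>)) * F \<eta>" for \<eta>
    proof -
      define u where "u = \<eta>$i"
      define v where "v = \<eta>$j"
      define d where "d = x$j - x$i"
      have d0: "0 \<le> d" using ij by (simp add: d_def)
      have pi: "\<phi> \<eta> $ i = v + d" and pj: "\<phi> \<eta> $ j = u - d"
        unfolding \<phi>_def a_def swv_def u_def v_def d_def by (simp_all add: \<tau>i \<tau>j)
      have po: "\<phi> \<eta> $ k = \<eta> $ k" if "k \<in> UNIV - {i} - {j}" for k
        using that unfolding \<phi>_def a_def swv_def by (simp add: \<tau>o)
      define R where "R = (\<Prod>k\<in>UNIV - {i} - {j}. h (\<eta>$k))"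
      have R0: "0 \<le> R" unfolding R_def by (simp add: prod_nonneg h0)
      have f1: "f \<eta> = h u * h v * R" unfolding fsplit u_def v_def R_def ..
      have Rphi: "(\<Prod>k\<in>UNIV - {i} - {j}. h (\<phi> \<eta> $ k)) = R"
        unfolding R_def by (rule prod.cong) (simp_all add: po)
      have f2: "f (\<phi> \<eta>) = h (v + d) * h (u - d) * R"
        unfolding fsplit pi pj Rphi ..
      have zij: "z \<eta> $ i - z \<eta> $ j = u - v - d" unfolding zk u_def v_def d_def by simp
      show ?thesis
      proof (cases "u \<le> v + d")
        case True
        have "h (v + d) * h (u - d) * R \<le> h u * h v * R"
          by (rule mult_right_mono[OF cmp[OF d0 True] R0])
        then have A: "0 \<le> f \<eta> - f (\<phi> \<eta>)" unfolding f1 f2 by simp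
        have "z \<eta> $ i \<le> z \<eta> $ j" using zij True by simp
        then have B: "0 \<le> F \<eta>" unfolding Fg using gmono[OF t0, of "z \<eta> $ i" "z \<eta> $ j"] by simp
        show ?thesis using A B by simp
      next
        case False
        have "v + d \<le> (u - d) + d" using False by simp
        from cmp[OF d0 this] have "h u * h v \<le> h (v + d) * h (u - d)" by (simp add: mult.commute)
        then have "h u * h v * R \<le> h (v + d) * h (u - d) * R" by (rule mult_right_mono[OF _ R0])
        then have A: "f \<eta> - f (\<phi> \<eta>) \<le> 0" unfolding f1 f2 by simp
        have "z \<eta> $ j \<le> z \<eta> $ i" using zij False by simp
        then have B: "F \<eta> \<le> 0" unfolding Fg using gmono[OF t0, of "z \<eta> $ j" "z \<eta> $ i"] by simp
        show ?thesis using A B by (simp add: mult_nonpos_nonpos)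
      qed
    qed
    show ?thesis unfolding N'
      by (rule sym_integral_nonneg[OF fm f0 phim pres Fm _ Fphi sign]) (use iF N' in simp)
  qed
  show ?thesis
    using upper lower unfolding bP bQ bT by (simp add: cP cQ intF)
qed


theorem lemma3:
  fixes x :: "real ^ 'n" and C :: real and N :: "(real ^ 'n) measure"
  assumes n2: "CARD('n) \<ge> 2"
    and C: "C > 0"
    and x: "x \<in> K_Splus C"
    and noise: "(\<exists>b>0. N = laplace_noise b) \<or> (\<exists>\<sigma>>0. N = gauss_noise \<sigma>)"
    and ij: "x $ i \<le> x $ j"
  shows "(bias N x (proj_Splus C) $ i - bias N x (proj_Splus C) $ j
           \<ge> bias N x (\<lambda>y. pos_part (proj_S C y)) $ i - bias N x (\<lambda>y. pos_part (proj_S C y)) $ j)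
    \<and> (bias N x (proj_Splus C) $ i - bias N x (proj_Splus C) $ j
           \<le> bias N x (\<lambda>y. pos_part (proj_S C y)) $ i - bias N x (\<lambda>y. pos_part (proj_S C y)) $ j
              + (\<integral>\<eta>. T_thr C (proj_S C (x + \<eta>)) \<partial>N))"
  using noise
proof
  assume "\<exists>b>0. N = laplace_noise b"
  then obtain b where b: "0 < b" and Nb: "N = laplace_noise b" by blast
  have N': "N = density lborel (\<lambda>\<eta>::real^'n. ennreal (\<Prod>k\<in>UNIV. hL b (\<eta>$k)))"
    unfolding Nb laplace_noise_def hL_def ..
  show ?thesis
    by (rule core[OF hL_meas hL_nonneg[OF b] hL_integrals[OF b] hL_cmp[OF b] N' C ij])
next
  assume "\<exists>\<sigma>>0. N = gauss_noise \<sigma>"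
  then obtain \<sigma> where s: "0 < \<sigma>" and Ns: "N = gauss_noise \<sigma>" by blast
  have N': "N = density lborel (\<lambda>\<eta>::real^'n. ennreal (\<Prod>k\<in>UNIV. normal_density 0 \<sigma> (\<eta>$k)))"
    unfolding Ns gauss_noise_def ..
  show ?thesis
    by (rule core[OF borel_measurable_normal_density normal_density_nonneg hG_integrals[OF s] hG_cmp[OF s] N' C ij])
qed

end
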